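(* Let $K$ be a number field, let $\alpha,\beta$ be multiplicatively independent positive rational numbers, and let $N$ be a natural number. Let $F\in K[[x^{\mathbb{R}}]]$ be a Hahn series satisfying nontrivial homogeneous equations $\sum_{i=0}^{d_1}P_i(x)F(x^{\alpha^i})=0$ and $\sum_{i=0}^{d_2}Q_i(x)F(x^{\beta^i})=0$ with $P_i,Q_i\in K[x]$, $P_{d_1}\ne0$, $Q_{d_2}\ne0$. Then there is a positive integer $l$ such that $G(x)=F(x^l)$ satisfies $$P(G)\subseteq\bigcap_{|n|,|m|\le N}\mathbb{Z}\big[\alpha^n\beta^m,(\alpha^n\beta^m)^{-1}\big],$$ the intersection being over all integers $n,m$ with $|n|\le N$, $|m|\le N$.
   Context: $K[[x^{\mathbb{R}}]]$ is the field of Hahn series $\sum_{i\in\mathbb{R}} f_ix^i$ ($f_i\in K$) with well-ordered support $P(F)=\{i:f_i\ne0\}$; $F(x^\gamma)=\sum_if_ix^{\gamma i}$. For a positive rational $\gamma$, $\mathbb{Z}[\gamma,\gamma^{-1}]$ is the subring of $\mathbb{Q}$ generated by $\gamma$ and $\gamma^{-1}$. Positive reals $\alpha,\beta$ are multiplicatively independent if $\log\alpha/\log\beta\notin\mathbb{Q}$. *)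

theory Defs
  imports Complex_Main "HOL-Computational_Algebra.Polynomial"
begin

text \<open>A number field, viewed (via an embedding) as a subfield K of the complex numbers
  that is finite-dimensional as a vector space over the rationals.\<close>
definition number_field :: "complex set \<Rightarrow> bool" where
  "number_field K \<longleftrightarrow>
     0 \<in> K \<and> 1 \<in> K \<and>
     (\<forall>x\<in>K. \<forall>y\<in>K. x + y \<in> K \<and> x - y \<in> K \<and> x * y \<in> K) \<and>
     (\<forall>x\<in>K. x \<noteq> 0 \<longrightarrow> inverse x \<in> K) \<and>
     (\<exists>B. finite B \<and> B \<subseteq> K \<and>
        (\<forall>x\<in>K. \<exists>c. (\<forall>b\<in>B. c b \<in> \<rat>) \<and> x = (\<Sum>b\<in>B. c b * b)))"

text \<open>A Hahn series in K[[x^R]] is represented by its coefficient function f,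
  F = sum_i f i x^i; its support P(F) = {i. f i \<noteq> 0} must be well-ordered.\<close>
definition hahn_support :: "(real \<Rightarrow> complex) \<Rightarrow> real set" where
  "hahn_support f = {i. f i \<noteq> 0}"

definition hahn_series :: "complex set \<Rightarrow> (real \<Rightarrow> complex) \<Rightarrow> bool" where
  "hahn_series K f \<longleftrightarrow> (\<forall>i. f i \<in> K) \<and>
     (\<forall>S. S \<subseteq> hahn_support f \<and> S \<noteq> {} \<longrightarrow> (\<exists>m\<in>S. \<forall>x\<in>S. m \<le> x))"

text \<open>F(x^\<gamma>) = sum_i f i x^(\<gamma> i): coefficient at j is f (j/\<gamma>).\<close>
definition hahn_subst_pow :: "(real \<Rightarrow> complex) \<Rightarrow> real \<Rightarrow> (real \<Rightarrow> complex)" where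
  "hahn_subst_pow f \<gamma> = (\<lambda>j. f (j / \<gamma>))"

definition poly_hahn_mult :: "complex poly \<Rightarrow> (real \<Rightarrow> complex) \<Rightarrow> (real \<Rightarrow> complex)" where
  "poly_hahn_mult p f = (\<lambda>j. \<Sum>k\<le>degree p. coeff p k * f (j - real k))"

definition mahler_eq :: "(nat \<Rightarrow> complex poly) \<Rightarrow> nat \<Rightarrow> real \<Rightarrow> (real \<Rightarrow> complex) \<Rightarrow> bool" where
  "mahler_eq P d \<gamma> f \<longleftrightarrow>
     (\<forall>j. (\<Sum>i\<le>d. poly_hahn_mult (P i) (hahn_subst_pow f (\<gamma> ^ i)) j) = 0)"

definition poly_over :: "complex set \<Rightarrow> complex poly \<Rightarrow> bool" where
  "poly_over K p \<longleftrightarrow> (\<forall>k. coeff p k \<in> K)"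

definition Zring_gen :: "real \<Rightarrow> real set" where
  "Zring_gen \<gamma> = \<Inter>{S. 1 \<in> S \<and> \<gamma> \<in> S \<and> inverse \<gamma> \<in> S \<and>
       (\<forall>x\<in>S. \<forall>y\<in>S. x + y \<in> S \<and> x - y \<in> S \<and> x * y \<in> S)}"

definition mult_indep :: "real \<Rightarrow> real \<Rightarrow> bool" where
  "mult_indep a b \<longleftrightarrow> ln a / ln b \<notin> \<rat>"

end

theory Submission
  imports Defs "HOL-Library.Poly_Mapping"
begin

type_synonym gp = "real \<Rightarrow>\<^sub>0 complex"

definition act :: "gp \<Rightarrow> (real \<Rightarrow> complex) \<Rightarrow> (real \<Rightarrow> complex)" where
  "act c f = (\<lambda>j. \<Sum>s\<in>Poly_Mapping.keys c. Poly_Mapping.lookup c s * f (j - s))"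

lemma act_superset:
  assumes "finite T" "Poly_Mapping.keys c \<subseteq> T"
  shows "act c f j = (\<Sum>s\<in>T. Poly_Mapping.lookup c s * f (j - s))"
  unfolding act_def
  by (rule sum.mono_neutral_left) (use assms in \<open>auto simp: in_keys_iff\<close>)

lemma act_add_left: "act (c1 + c2) f j = act c1 f j + act c2 f j"
proof -
  let ?T = "Poly_Mapping.keys c1 \<union> Poly_Mapping.keys c2"
  have "act (c1 + c2) f j = (\<Sum>s\<in>?T. Poly_Mapping.lookup (c1 + c2) s * f (j - s))"
    by (rule act_superset) (use keys_add[of c1 c2] in auto)
  also have "\<dots> = (\<Sum>s\<in>?T. Poly_Mapping.lookup c1 s * f (j - s)) + (\<Sum>s\<in>?T. Poly_Mapping.lookup c2 s * f (j - s))"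
    by (simp add: lookup_add algebra_simps sum.distrib)
  also have "\<dots> = act c1 f j + act c2 f j"
    by (subst (1 2) act_superset[of ?T]) auto
  finally show ?thesis .
qed

lemma act_zero_left [simp]: "act 0 f j = 0"
  by (simp add: act_def)

lemma act_sum_left: "finite A \<Longrightarrow> act (\<Sum>i\<in>A. c i) f j = (\<Sum>i\<in>A. act (c i) f j)"
  by (induction A rule: finite_induct) (auto simp: act_add_left)

lemma act_single: "act (Poly_Mapping.single s a) f j = a * f (j - s)"
  by (cases "a = 0") (auto simp: act_def)

lemma act_one [simp]: "act 1 f = f"
  by (rule ext) (metis act_single diff_zero mult_1 single_one)

lemma gp_decomp: "c = (\<Sum>s\<in>Poly_Mapping.keys c. Poly_Mapping.single s (Poly_Mapping.lookup c s))"
proof -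
  have *: "Poly_Mapping.lookup c k = Poly_Mapping.lookup (\<Sum>s\<in>Poly_Mapping.keys c. Poly_Mapping.single s (Poly_Mapping.lookup c s)) k" for k
  proof -
    have "Poly_Mapping.lookup (\<Sum>s\<in>Poly_Mapping.keys c. Poly_Mapping.single s (Poly_Mapping.lookup c s)) k
        = (\<Sum>s\<in>Poly_Mapping.keys c. (if s = k then Poly_Mapping.lookup c s else 0))"
      by (simp add: lookup_sum lookup_single when_def)
    also have "\<dots> = Poly_Mapping.lookup c k"
      by (simp add: in_keys_iff)
    finally show ?thesis by simp
  qed
  show ?thesis unfolding poly_mapping_eq_iff by (rule ext) (rule *)
qed

lemma act_mult: "act (c1 * c2) f j = act c1 (act c2 f) j"
proof -
  let ?K1 = "Poly_Mapping.keys c1" and ?K2 = "Poly_Mapping.keys c2"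
  have "c1 * c2 = (\<Sum>s\<in>?K1. Poly_Mapping.single s (Poly_Mapping.lookup c1 s)) *
                  (\<Sum>t\<in>?K2. Poly_Mapping.single t (Poly_Mapping.lookup c2 t))"
    by (subst (1) gp_decomp[of c1], subst (1) gp_decomp[of c2]) (rule refl)
  also have "\<dots> = (\<Sum>s\<in>?K1. \<Sum>t\<in>?K2. Poly_Mapping.single (s + t) (Poly_Mapping.lookup c1 s * Poly_Mapping.lookup c2 t))"
    by (simp add: sum_distrib_left sum_distrib_right mult_single sum.swap[of _ ?K2])
  finally have eq: "c1 * c2 = \<dots>" .
  have "act (c1 * c2) f j = (\<Sum>s\<in>?K1. \<Sum>t\<in>?K2. Poly_Mapping.lookup c1 s * Poly_Mapping.lookup c2 t * f (j - (s + t)))"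
    by (simp add: eq act_sum_left act_single)
  also have "\<dots> = act c1 (act c2 f) j"
    by (simp add: act_def sum_distrib_left algebra_simps)
  finally show ?thesis .
qed

lemma act_add_right: "act c (\<lambda>j. f j + g j) j = act c f j + act c g j"
  unfolding act_def by (simp add: distrib_left sum.distrib)

lemma act_sum_right: "finite L \<Longrightarrow> act c (\<lambda>j. \<Sum>l\<in>L. g l j) j = (\<Sum>l\<in>L. act c (g l) j)"
  unfolding act_def by (simp add: sum_distrib_left) (rule sum.swap)

lemma act_uminus_right: "act c (\<lambda>j. - f j) j = - act c f j"
  by (simp add: act_def sum_negf)

lemma act_zero_right [simp]: "act c (\<lambda>j. 0) j = 0"
  by (simp add: act_def)

definition pmp :: "complex poly \<Rightarrow> gp" where
  "pmp p = (\<Sum>k\<le>degree p. Poly_Mapping.single (real k) (coeff p k))"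

lemma act_pmp: "act (pmp p) f = poly_hahn_mult p f"
  by (rule ext) (simp add: pmp_def act_sum_left act_single poly_hahn_mult_def)

lemma lookup_pmp: "Poly_Mapping.lookup (pmp p) (real k) = coeff p k"
proof -
  have "Poly_Mapping.lookup (pmp p) (real k) = (\<Sum>k'\<le>degree p. (if k' = k then coeff p k' else 0))"
    unfolding pmp_def lookup_sum by (intro sum.cong) (auto simp: lookup_single when_def)
  also have "\<dots> = coeff p k"
    by (auto simp: coeff_eq_0)
  finally show ?thesis .
qed

lemma pmp_nz: "p \<noteq> 0 \<Longrightarrow> pmp p \<noteq> 0"
  by (metis lookup_pmp lookup_zero leading_coeff_0_iff)

lemma keys_pmp: "Poly_Mapping.keys (pmp p) \<subseteq> range real"
proof
  fix s assume "s \<in> Poly_Mapping.keys (pmp p)"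
  then have "(\<Sum>k\<le>degree p. Poly_Mapping.lookup (Poly_Mapping.single (real k) (coeff p k)) s) \<noteq> 0"
    by (simp add: pmp_def lookup_sum in_keys_iff)
  then obtain k where "Poly_Mapping.lookup (Poly_Mapping.single (real k) (coeff p k)) s \<noteq> 0"
    by (meson sum.not_neutral_contains_not_neutral)
  then have "s = real k" by (auto simp: lookup_single when_def split: if_splits)
  then show "s \<in> range real" by simp
qed

definition gsub :: "real \<Rightarrow> gp \<Rightarrow> gp" where
  "gsub \<gamma> c = (\<Sum>s\<in>Poly_Mapping.keys c. Poly_Mapping.single (\<gamma> * s) (Poly_Mapping.lookup c s))"

lemma act_gsub:
  assumes "\<gamma> \<noteq> 0"
  shows "act (gsub \<gamma> c) (hahn_subst_pow f \<gamma>) j = act c f (j / \<gamma>)"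
proof -
  have "act (gsub \<gamma> c) (hahn_subst_pow f \<gamma>) j =
      (\<Sum>s\<in>Poly_Mapping.keys c. Poly_Mapping.lookup c s * f ((j - \<gamma> * s) / \<gamma>))"
    by (simp add: gsub_def act_sum_left act_single hahn_subst_pow_def)
  also have "\<dots> = act c f (j / \<gamma>)"
    unfolding act_def using assms by (intro sum.cong) (auto simp: field_simps)
  finally show ?thesis .
qed

lemma lookup_gsub:
  assumes "\<gamma> \<noteq> 0"
  shows "Poly_Mapping.lookup (gsub \<gamma> c) (\<gamma> * t) = Poly_Mapping.lookup c t"
proof -
  have "Poly_Mapping.lookup (gsub \<gamma> c) (\<gamma> * t) =
     (\<Sum>s\<in>Poly_Mapping.keys c. (if s = t then Poly_Mapping.lookup c s else 0))"
    unfolding gsub_def lookup_sum using assms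
    by (intro sum.cong) (auto simp: lookup_single when_def)
  also have "\<dots> = Poly_Mapping.lookup c t"
    by (simp add: in_keys_iff)
  finally show ?thesis .
qed

lemma gsub_nz: "\<gamma> \<noteq> 0 \<Longrightarrow> c \<noteq> 0 \<Longrightarrow> gsub \<gamma> c \<noteq> 0"
  by (metis lookup_gsub lookup_zero poly_mapping_eq_iff ext)

lemma keys_sum_sub: "Poly_Mapping.keys (\<Sum>i\<in>A. b i) \<subseteq> (\<Union>i\<in>A. Poly_Mapping.keys (b i))"
  by (rule keys_sum)

lemma keys_gsub: "Poly_Mapping.keys (gsub \<gamma> c) \<subseteq> (\<lambda>s. \<gamma> * s) ` Poly_Mapping.keys c"
proof -
  have "Poly_Mapping.keys (gsub \<gamma> c) \<subseteq> (\<Union>s\<in>Poly_Mapping.keys c. Poly_Mapping.keys (Poly_Mapping.single (\<gamma> * s) (Poly_Mapping.lookup c s)))"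
    unfolding gsub_def by (rule keys_sum)
  also have "\<dots> \<subseteq> (\<lambda>s. \<gamma> * s) ` Poly_Mapping.keys c"
    by auto
  finally show ?thesis .
qed

lemma subst_subst: "hahn_subst_pow (hahn_subst_pow f a) b = hahn_subst_pow f (a * b)"
  by (rule ext) (simp add: hahn_subst_pow_def divide_divide_eq_left mult.commute)

definition QA :: "gp set" where "QA = {c. Poly_Mapping.keys c \<subseteq> \<rat>}"

lemma QA_0 [simp]: "0 \<in> QA" and QA_1 [simp]: "1 \<in> QA"
  by (auto simp: QA_def)

lemma QA_add: "a \<in> QA \<Longrightarrow> b \<in> QA \<Longrightarrow> a + b \<in> QA"
  using keys_add[of a b] by (auto simp: QA_def)

lemma QA_uminus: "a \<in> QA \<Longrightarrow> - a \<in> QA"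
  by (auto simp: QA_def)

lemma QA_diff: "a \<in> QA \<Longrightarrow> b \<in> QA \<Longrightarrow> a - b \<in> QA"
  using keys_diff[of a b] by (auto simp: QA_def)

lemma QA_mult: "a \<in> QA \<Longrightarrow> b \<in> QA \<Longrightarrow> a * b \<in> QA"
  using keys_mult[of a b] by (force simp: QA_def)

lemma QA_sum: "(\<And>i. i \<in> A \<Longrightarrow> b i \<in> QA) \<Longrightarrow> (\<Sum>i\<in>A. b i) \<in> QA"
  by (induction A rule: infinite_finite_induct) (auto intro: QA_add)

lemma QA_prod: "(\<And>i. i \<in> A \<Longrightarrow> b i \<in> QA) \<Longrightarrow> (\<Prod>i\<in>A. b i) \<in> QA"
  by (induction A rule: infinite_finite_induct) (auto intro: QA_mult)

lemma QA_pmp: "pmp p \<in> QA"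
  using keys_pmp[of p] by (auto simp: QA_def)

lemma QA_gsub: "\<gamma> \<in> \<rat> \<Longrightarrow> c \<in> QA \<Longrightarrow> gsub \<gamma> c \<in> QA"
  using keys_gsub[of \<gamma> c] unfolding QA_def by (blast intro: Rats_mult)

definition inspan :: "'l set \<Rightarrow> ('l \<Rightarrow> real \<Rightarrow> complex) \<Rightarrow> (real \<Rightarrow> complex) \<Rightarrow> bool" where
  "inspan G g v \<longleftrightarrow> (\<exists>a. (\<forall>l\<in>G. a l \<in> QA) \<and> v = (\<lambda>j. \<Sum>l\<in>G. act (a l) (g l) j))"

definition good :: "'l set \<Rightarrow> ('l \<Rightarrow> real \<Rightarrow> complex) \<Rightarrow> (real \<Rightarrow> complex) \<Rightarrow> bool" where
  "good G g v \<longleftrightarrow> (\<exists>c\<in>QA. c \<noteq> 0 \<and> inspan G g (act c v))"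

lemma act_comm: "act c1 (act c2 v) = act c2 (act c1 v)"
  by (rule ext) (metis act_mult mult.commute)

lemma act_mult_fun: "act (c1 * c2) v = act c1 (act c2 v)"
  by (rule ext) (rule act_mult)

lemma inspan_act:
  assumes "finite G" "x \<in> QA" "inspan G g v"
  shows "inspan G g (act x v)"
proof -
  obtain a where a: "\<forall>l\<in>G. a l \<in> QA" "v = (\<lambda>j. \<Sum>l\<in>G. act (a l) (g l) j)"
    using assms(3) unfolding inspan_def by blast
  have "act x v = (\<lambda>j. \<Sum>l\<in>G. act (x * a l) (g l) j)"
    by (rule ext) (simp add: a(2) act_sum_right[OF assms(1)] act_mult)
  then show ?thesis unfolding inspan_def using a(1) assms(2)
    by (intro exI[of _ "\<lambda>l. x * a l"]) (auto intro!: QA_mult)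
qed

lemma inspan_add:
  assumes "inspan G g v" "inspan G g w"
  shows "inspan G g (\<lambda>j. v j + w j)"
proof -
  obtain a where a: "\<forall>l\<in>G. a l \<in> QA" "v = (\<lambda>j. \<Sum>l\<in>G. act (a l) (g l) j)"
    using assms(1) unfolding inspan_def by blast
  obtain b where b: "\<forall>l\<in>G. b l \<in> QA" "w = (\<lambda>j. \<Sum>l\<in>G. act (b l) (g l) j)"
    using assms(2) unfolding inspan_def by blast
  have "(\<lambda>j. v j + w j) = (\<lambda>j. \<Sum>l\<in>G. act (a l + b l) (g l) j)"
    by (rule ext) (simp add: a(2) b(2) act_add_left sum.distrib)
  then show ?thesis unfolding inspan_def using a(1) b(1)
    by (intro exI[of _ "\<lambda>l. a l + b l"]) (auto intro!: QA_add)
qed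

lemma inspan_uminus:
  assumes "inspan G g v"
  shows "inspan G g (\<lambda>j. - v j)"
proof -
  obtain a where a: "\<forall>l\<in>G. a l \<in> QA" "v = (\<lambda>j. \<Sum>l\<in>G. act (a l) (g l) j)"
    using assms(1) unfolding inspan_def by blast
  have "act (- a l) f j = - act (a l) f j" for l f j
    using act_add_left[of "a l" "- a l" f j] by (simp add: eq_neg_iff_add_eq_0 add.commute)
  then have "(\<lambda>j. - v j) = (\<lambda>j. \<Sum>l\<in>G. act (- a l) (g l) j)"
    by (simp add: a(2) sum_negf)
  then show ?thesis unfolding inspan_def using a(1)
    by (intro exI[of _ "\<lambda>l. - a l"]) (auto intro!: QA_uminus)
qed

lemma act_add_fun: "act c (\<lambda>j. v j + w j) = (\<lambda>j. act c v j + act c w j)"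
  by (rule ext) (rule act_add_right)

lemma good_add:
  assumes "finite G" "good G g v" "good G g w"
  shows "good G g (\<lambda>j. v j + w j)"
proof -
  obtain c1 where c1: "c1 \<in> QA" "c1 \<noteq> 0" "inspan G g (act c1 v)"
    using assms(2) unfolding good_def by blast
  obtain c2 where c2: "c2 \<in> QA" "c2 \<noteq> 0" "inspan G g (act c2 w)"
    using assms(3) unfolding good_def by blast
  have "act (c1 * c2) (\<lambda>j. v j + w j) = (\<lambda>j. act c2 (act c1 v) j + act c1 (act c2 w) j)"
    by (simp add: act_add_fun act_mult_fun act_comm)
  moreover have "inspan G g (\<lambda>j. act c2 (act c1 v) j + act c1 (act c2 w) j)"
    by (intro inspan_add inspan_act assms(1) c1 c2)
  ultimately show ?thesis unfolding good_def using c1 c2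
    by (intro bexI[of _ "c1 * c2"]) (auto intro: QA_mult)
qed

lemma good_act:
  assumes "finite G" "x \<in> QA" "good G g v"
  shows "good G g (act x v)"
proof -
  obtain c where c: "c \<in> QA" "c \<noteq> 0" "inspan G g (act c v)"
    using assms(3) unfolding good_def by blast
  have "inspan G g (act x (act c v))" by (intro inspan_act assms c)
  then show ?thesis unfolding good_def using c by (auto simp: act_comm)
qed

lemma good_uminus:
  assumes "good G g v"
  shows "good G g (\<lambda>j. - v j)"
proof -
  obtain c where c: "c \<in> QA" "c \<noteq> 0" "inspan G g (act c v)"
    using assms unfolding good_def by blast
  have "act c (\<lambda>j. - v j) = (\<lambda>j. - act c v j)"
    by (rule ext) (rule act_uminus_right)
  then show ?thesis unfolding good_def using c inspan_uminus[OF c(3)] by auto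
qed

lemma good_zero: "good G g (\<lambda>j. 0)"
  unfolding good_def inspan_def
  by (intro bexI[of _ 1]) (auto intro!: exI[of _ "\<lambda>_. 0"] simp: fun_eq_iff)

lemma good_sum:
  assumes "finite G" "finite A" "\<And>i. i \<in> A \<Longrightarrow> good G g (v i)"
  shows "good G g (\<lambda>j. \<Sum>i\<in>A. v i j)"
  using assms(2,3)
proof (induction A rule: finite_induct)
  case empty then show ?case by (simp add: good_zero)
next
  case (insert x F)
  then show ?case using good_add[OF assms(1), of g "v x" "\<lambda>j. \<Sum>i\<in>F. v i j"] by simp
qed

lemma good_cancel:
  assumes "y \<in> QA" "y \<noteq> 0" "good G g (act y v)"
  shows "good G g v"
proof -
  obtain c where c: "c \<in> QA" "c \<noteq> 0" "inspan G g (act c (act y v))"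
    using assms(3) unfolding good_def by blast
  then show ?thesis unfolding good_def using assms(1,2)
    by (intro bexI[of _ "c * y"]) (auto simp: act_mult_fun intro: QA_mult)
qed

lemma good_gen:
  assumes "finite G" "l \<in> G"
  shows "good G g (g l)"
proof -
  have "g l = (\<lambda>j. \<Sum>l'\<in>G. act (if l' = l then 1 else 0) (g l') j)"
  proof (rule ext)
    fix j
    have "(\<Sum>l'\<in>G. act (if l' = l then 1 else 0) (g l') j) = (\<Sum>l'\<in>G. if l' = l then g l j else 0)"
      by (intro sum.cong) auto
    also have "\<dots> = g l j" using assms by simp
    finally show "g l j = (\<Sum>l'\<in>G. act (if l' = l then 1 else 0) (g l') j)" by simp
  qed
  then have "inspan G g (act 1 (g l))"
    unfolding inspan_def by (intro exI[of _ "\<lambda>l'. if l' = l then 1 else 0"]) auto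
  then show ?thesis unfolding good_def by (intro bexI[of _ 1]) auto
qed

lemma lin_dep:
  fixes v :: "'i \<Rightarrow> 'l \<Rightarrow> gp"
  assumes "finite G" "finite I" "card G < card I" "\<forall>k\<in>I. \<forall>l\<in>G. v k l \<in> QA"
  shows "\<exists>lam. (\<forall>k\<in>I. lam k \<in> QA) \<and> (\<exists>k\<in>I. lam k \<noteq> 0) \<and> (\<forall>l\<in>G. (\<Sum>k\<in>I. lam k * v k l) = 0)"
  using assms
proof (induction G arbitrary: I v rule: finite_induct)
  case empty
  then obtain k0 where "k0 \<in> I" by fastforce
  then show ?case by (intro exI[of _ "\<lambda>k. if k = k0 then 1 else 0"]) auto
next
  case (insert l0 G')
  show ?case
  proof (cases "\<forall>k\<in>I. v k l0 = 0")
    case True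
    have "card G' < card I" using insert by simp
    with insert.IH[of I v] insert.prems(1,3) obtain lam where
      lam: "\<forall>k\<in>I. lam k \<in> QA" "\<exists>k\<in>I. lam k \<noteq> 0" "\<forall>l\<in>G'. (\<Sum>k\<in>I. lam k * v k l) = 0"
      by auto
    then show ?thesis using True by (intro exI[of _ lam]) auto
  next
    case False
    then obtain k0 where k0: "k0 \<in> I" "v k0 l0 \<noteq> 0" by blast
    define a where "a = v k0 l0"
    define I' where "I' = I - {k0}"
    define w where "w = (\<lambda>k l. a * v k l - v k l0 * v k0 l)"
    have cI: "card G' < card I'"
      using insert.prems(2) insert.hyps k0(1) by (simp add: I'_def)
    have aQ: "a \<in> QA" using insert.prems(3) k0 by (simp add: a_def)
    have wQ: "\<forall>k\<in>I'. \<forall>l\<in>G'. w k l \<in> QA"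
      using insert.prems(3) k0(1) by (auto simp: w_def I'_def a_def intro!: QA_diff QA_mult)
    from insert.IH[of I' w] insert.prems(1) cI wQ obtain mu where
      mu: "\<forall>k\<in>I'. mu k \<in> QA" "\<exists>k\<in>I'. mu k \<noteq> 0" "\<forall>l\<in>G'. (\<Sum>k\<in>I'. mu k * w k l) = 0"
      by (auto simp: I'_def)
    define lam where "lam = (\<lambda>k. if k = k0 then - (\<Sum>k'\<in>I'. mu k' * v k' l0) else mu k * a)"
    have finI': "finite I'" using insert.prems(1) by (simp add: I'_def)
    have I_eq: "I = insert k0 I'" "k0 \<notin> I'" using k0 by (auto simp: I'_def)
    have sum_eq: "(\<Sum>k\<in>I. lam k * v k l) = (\<Sum>k\<in>I'. mu k * w k l)" for l
    proof -
      have "(\<Sum>k\<in>I. lam k * v k l) = lam k0 * v k0 l + (\<Sum>k\<in>I'. lam k * v k l)"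
        using I_eq finI' by simp
      also have "(\<Sum>k\<in>I'. lam k * v k l) = (\<Sum>k\<in>I'. mu k * a * v k l)"
        using I_eq(2) by (intro sum.cong) (auto simp: lam_def)
      also have "lam k0 * v k0 l = - (\<Sum>k\<in>I'. mu k * v k l0 * v k0 l)"
        by (simp add: lam_def sum_distrib_right)
      finally show ?thesis
        by (simp add: w_def right_diff_distrib sum_subtractf algebra_simps)
    qed
    show ?thesis
    proof (intro exI[of _ lam] conjI ballI)
      fix k assume "k \<in> I"
      then show "lam k \<in> QA" using mu(1) aQ insert.prems(3)
        by (auto simp: lam_def I'_def intro!: QA_uminus QA_sum QA_mult)
    next
      obtain k1 where "k1 \<in> I'" "mu k1 \<noteq> 0" using mu(2) by blast
      then show "\<exists>k\<in>I. lam k \<noteq> 0"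
        using k0 I_eq by (intro bexI[of _ k1]) (auto simp: lam_def a_def)
    next
      fix l assume "l \<in> insert l0 G'"
      then show "(\<Sum>k\<in>I. lam k * v k l) = 0"
      proof
        assume "l = l0"
        then show ?thesis by (simp add: sum_eq w_def a_def mult.commute)
      next
        assume "l \<in> G'"
        then show ?thesis using mu(3) by (simp add: sum_eq)
      qed
    qed
  qed
qed

lemma exclusion:
  fixes f :: "real \<Rightarrow> complex" and I :: "'i set" and e :: "'i \<Rightarrow> gp" and \<gamma> :: "'i \<Rightarrow> real" and Y :: "real set"
  assumes finI: "finite I"
    and rel: "\<forall>j. (\<Sum>k\<in>I. act (e k) (hahn_subst_pow f (\<gamma> k)) j) = 0"
    and gpos: "\<forall>k\<in>I. \<gamma> k > 0" and ginj: "inj_on \<gamma> I"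
    and nz: "\<exists>k\<in>I. e k \<noteq> 0"
    and wo: "\<forall>S. S \<subseteq> hahn_support f \<and> S \<noteq> {} \<longrightarrow> (\<exists>m\<in>S. \<forall>x\<in>S. m \<le> x)"
    and Yadd: "\<forall>x\<in>Y. \<forall>y\<in>Y. x + y \<in> Y"
    and Yrat: "\<forall>k\<in>I. \<forall>k'\<in>I. \<forall>u\<in>Y. \<gamma> k' / \<gamma> k * u \<in> Y"
    and Yphi1: "\<forall>k\<in>I. \<forall>k'\<in>I. \<forall>s\<in>Poly_Mapping.keys (e k). \<forall>s'\<in>Poly_Mapping.keys (e k'). (s' - s) / \<gamma> k \<in> Y"
    and Yphi2: "\<forall>k1\<in>I. \<forall>k2\<in>I. k1 \<noteq> k2 \<longrightarrow> (\<forall>s\<in>Poly_Mapping.keys (e k1). \<forall>s'\<in>Poly_Mapping.keys (e k2). (s' - s) / (\<gamma> k1 - \<gamma> k2) \<in> Y)"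
  shows "hahn_support f \<subseteq> Y"
proof (rule ccontr)
  assume "\<not> hahn_support f \<subseteq> Y"
  define T where "T = hahn_support f - Y"
  have "T \<subseteq> hahn_support f" "T \<noteq> {}" using \<open>\<not> hahn_support f \<subseteq> Y\<close> by (auto simp: T_def)
  then obtain \<mu> where mu: "\<mu> \<in> T" "\<forall>x\<in>T. \<mu> \<le> x" using wo by blast
  have muY: "\<mu> \<notin> Y" and muf: "f \<mu> \<noteq> 0" using mu(1) by (auto simp: T_def hahn_support_def)
  have closure: "u \<in> Y" if "k \<in> I" "k' \<in> I" "s \<in> Poly_Mapping.keys (e k)" "s' \<in> Poly_Mapping.keys (e k')"
      "u' \<in> Y" "s + \<gamma> k * u = s' + \<gamma> k' * u'" for k k' s s' u u'
  proof -
    have "\<gamma> k > 0" using gpos that(1) by auto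
    have h: "\<gamma> k * u = (s' - s) + \<gamma> k' * u'" using that(6) by (simp add: algebra_simps)
    have "u = (\<gamma> k * u) / \<gamma> k" using \<open>\<gamma> k > 0\<close> by simp
    also have "\<dots> = ((s' - s) + \<gamma> k' * u') / \<gamma> k" using h by simp
    also have "\<dots> = (s' - s) / \<gamma> k + \<gamma> k' / \<gamma> k * u'" by (simp add: add_divide_distrib)
    finally have "u = (s' - s) / \<gamma> k + \<gamma> k' / \<gamma> k * u'" .
    moreover have "(s' - s) / \<gamma> k \<in> Y" using Yphi1 that by blast
    moreover have "\<gamma> k' / \<gamma> k * u' \<in> Y" using Yrat that by blast
    ultimately show ?thesis using Yadd by simp
  qed
  define I' where "I' = {k\<in>I. e k \<noteq> 0}"
  have finI': "finite I'" "I' \<noteq> {}" using finI nz by (auto simp: I'_def)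
  define lo where "lo = (\<lambda>k. Min (Poly_Mapping.keys (e k)))"
  have o_in: "lo k \<in> Poly_Mapping.keys (e k)" if "k \<in> I'" for k
    using that unfolding lo_def I'_def by (intro Min_in) auto
  have o_le: "lo k \<le> s" if "s \<in> Poly_Mapping.keys (e k)" for k s
    using that unfolding lo_def by (intro Min_le) auto
  define g where "g = (\<lambda>k. lo k + \<gamma> k * \<mu>)"
  define m where "m = Min (g ` I')"
  have m_le: "m \<le> g k" if "k \<in> I'" for k using finI' that by (auto simp: m_def)
  have "m \<in> g ` I'" unfolding m_def using finI' by (intro Min_in) auto
  then obtain ks where ks: "ks \<in> I'" "g ks = m" by auto
  have ksI: "ks \<in> I" using ks by (auto simp: I'_def)
  show False
  proof (cases "\<exists>k2\<in>I'. k2 \<noteq> ks \<and> g k2 = m")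
    case True
    then obtain k2 where k2: "k2 \<in> I'" "k2 \<noteq> ks" "g k2 = m" by blast
    have k2I: "k2 \<in> I" using k2 by (auto simp: I'_def)
    have "\<gamma> ks \<noteq> \<gamma> k2" using ginj ksI k2I k2(2) by (auto dest: inj_onD)
    moreover have "lo ks + \<gamma> ks * \<mu> = lo k2 + \<gamma> k2 * \<mu>" using ks k2 by (simp add: g_def)
    ultimately have "(\<gamma> ks - \<gamma> k2) * \<mu> = lo k2 - lo ks" "\<gamma> ks - \<gamma> k2 \<noteq> 0"
      by (simp_all add: algebra_simps)
    then have "\<mu> = (lo k2 - lo ks) / (\<gamma> ks - \<gamma> k2)"
      by (simp add: eq_divide_eq mult.commute)
    moreover have "(lo k2 - lo ks) / (\<gamma> ks - \<gamma> k2) \<in> Y"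
      using Yphi2[rule_format, of ks k2 "lo ks" "lo k2"] ksI k2I k2(2) o_in[OF ks(1)] o_in[OF k2(1)] by auto
    ultimately show False using muY by simp
  next
    case False
    define trm where "trm = (\<lambda>k s. Poly_Mapping.lookup (e k) s * f ((m - s) / \<gamma> k))"
    have trm0: "trm k s = 0" if "k \<in> I" "s \<in> Poly_Mapping.keys (e k)" "\<not> (k = ks \<and> s = lo ks)" for k s
    proof (rule ccontr)
      assume tnz: "trm k s \<noteq> 0"
      have kI': "k \<in> I'" using that(1,2) by (auto simp: I'_def)
      define u where "u = (m - s) / \<gamma> k"
      have gk: "\<gamma> k > 0" using gpos that(1) by auto
      have fu: "f u \<noteq> 0" using tnz by (simp add: trm_def u_def)
      have j0: "m = s + \<gamma> k * u" using gk by (simp add: u_def)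
      have "u \<notin> Y"
      proof
        assume "u \<in> Y"
        have "lo ks + \<gamma> ks * \<mu> = s + \<gamma> k * u" using ks j0 by (simp add: g_def)
        then have "\<mu> \<in> Y" using closure[OF ksI that(1) o_in[OF ks(1)] that(2) \<open>u \<in> Y\<close>] by simp
        then show False using muY by simp
      qed
      then have "u \<in> T" using fu by (simp add: T_def hahn_support_def)
      then have "\<mu> \<le> u" using mu(2) by simp
      have "lo k \<le> s" using o_le that(2) by simp
      have "g k \<le> m"
      proof -
        have "\<gamma> k * \<mu> \<le> \<gamma> k * u" using \<open>\<mu> \<le> u\<close> gk by simp
        then show ?thesis using \<open>lo k \<le> s\<close> j0 by (simp add: g_def)
      qed
      then have "g k = m" using m_le[OF kI'] by simp
      then have "k = ks" using False kI' by blast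
      have "\<gamma> k * \<mu> \<le> \<gamma> k * u" using \<open>\<mu> \<le> u\<close> gk by simp
      then have "s = lo ks" using \<open>g k = m\<close> j0 \<open>lo k \<le> s\<close> \<open>k = ks\<close> by (simp add: g_def)
      then show False using that(3) \<open>k = ks\<close> by simp
    qed
    have inner: "act (e k) (hahn_subst_pow f (\<gamma> k)) m = (\<Sum>s\<in>Poly_Mapping.keys (e k). trm k s)" for k
      by (simp add: act_def hahn_subst_pow_def trm_def)
    have "(\<Sum>k\<in>I. act (e k) (hahn_subst_pow f (\<gamma> k)) m) = (\<Sum>k\<in>I. \<Sum>s\<in>Poly_Mapping.keys (e k). trm k s)"
      by (simp add: inner)
    also have "\<dots> = (\<Sum>s\<in>Poly_Mapping.keys (e ks). trm ks s) + (\<Sum>k\<in>I - {ks}. \<Sum>s\<in>Poly_Mapping.keys (e k). trm k s)"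
      using finI ksI by (simp add: sum.remove)
    also have "(\<Sum>k\<in>I - {ks}. \<Sum>s\<in>Poly_Mapping.keys (e k). trm k s) = 0"
      using trm0 by (intro sum.neutral ballI) auto
    also have "(\<Sum>s\<in>Poly_Mapping.keys (e ks). trm ks s) = trm ks (lo ks) + (\<Sum>s\<in>Poly_Mapping.keys (e ks) - {lo ks}. trm ks s)"
      using o_in[OF ks(1)] by (simp add: sum.remove)
    also have "(\<Sum>s\<in>Poly_Mapping.keys (e ks) - {lo ks}. trm ks s) = 0"
      using trm0 ksI by (intro sum.neutral ballI) auto
    also have "trm ks (lo ks) = Poly_Mapping.lookup (e ks) (lo ks) * f \<mu>"
    proof -
      have "\<gamma> ks > 0" using gpos ksI by auto
      moreover have "m = lo ks + \<gamma> ks * \<mu>" using ks by (simp add: g_def)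
      ultimately show ?thesis by (simp add: trm_def)
    qed
    finally have "(\<Sum>k\<in>I. act (e k) (hahn_subst_pow f (\<gamma> k)) m) = Poly_Mapping.lookup (e ks) (lo ks) * f \<mu>"
      by simp
    moreover have "Poly_Mapping.lookup (e ks) (lo ks) \<noteq> 0" using o_in[OF ks(1)] by (simp add: in_keys_iff)
    ultimately show False using rel muf by simp
  qed
qed

lemma mahler_act:
  assumes "mahler_eq P d \<alpha> f"
  shows "\<forall>j. (\<Sum>i\<le>d. act (pmp (P i)) (hahn_subst_pow f (\<alpha> ^ i)) j) = 0"
  using assms by (simp add: mahler_eq_def act_pmp)

lemma mahler_shift:
  assumes "mahler_eq P d \<alpha> f" "\<gamma> \<noteq> 0"
  shows "(\<Sum>i\<le>d. act (gsub \<gamma> (pmp (P i))) (hahn_subst_pow f (\<alpha> ^ i * \<gamma>)) j) = 0"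
proof -
  have "(\<Sum>i\<le>d. act (gsub \<gamma> (pmp (P i))) (hahn_subst_pow f (\<alpha> ^ i * \<gamma>)) j)
      = (\<Sum>i\<le>d. act (pmp (P i)) (hahn_subst_pow f (\<alpha> ^ i)) (j / \<gamma>))"
    by (intro sum.cong refl) (simp add: subst_subst[symmetric] act_gsub assms(2))
  also have "\<dots> = 0" using mahler_act[OF assms(1)] by blast
  finally show ?thesis .
qed

lemma closure_good:
  fixes \<alpha> \<beta> :: real
  assumes "\<alpha> > 0" "\<beta> > 0" "\<alpha> \<in> \<rat>" "\<beta> \<in> \<rat>"
    and "mahler_eq P d1 \<alpha> f" "mahler_eq Q d2 \<beta> f" "P d1 \<noteq> 0" "Q d2 \<noteq> 0"
  shows "good ({..<d1} \<times> {..<d2}) (\<lambda>(i, j). hahn_subst_pow f (\<alpha> ^ i * \<beta> ^ j)) (hahn_subst_pow f (\<alpha> ^ i * \<beta> ^ j))"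
proof (induction "i + j" arbitrary: i j rule: less_induct)
  case less
  let ?G = "{..<d1} \<times> {..<d2}" and ?g = "\<lambda>(i, j). hahn_subst_pow f (\<alpha> ^ i * \<beta> ^ j)"
  have finG: "finite ?G" by simp
  show ?case
  proof (cases "i < d1 \<and> j < d2")
    case True
    then show ?thesis using good_gen[OF finG, of "(i, j)" ?g] by simp
  next
    case False
    show ?thesis
    proof (cases "d1 \<le> i")
      case True
      define \<gamma> where "\<gamma> = \<alpha> ^ (i - d1) * \<beta> ^ j"
      have gnz: "\<gamma> \<noteq> 0" and gQ: "\<gamma> \<in> \<rat>" using assms(1-4) by (auto simp: \<gamma>_def)
      define E where "E = (\<lambda>i'. gsub \<gamma> (pmp (P i')))"
      have EQ: "E i' \<in> QA" for i' using gQ by (simp add: E_def QA_gsub QA_pmp)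
      have Enz: "E d1 \<noteq> 0" using gnz assms(7) by (simp add: E_def gsub_nz pmp_nz)
      have pw: "\<alpha> ^ i' * \<gamma> = \<alpha> ^ (i - d1 + i') * \<beta> ^ j" for i'
        by (simp add: \<gamma>_def power_add)
      have rel: "(\<Sum>i'\<le>d1. act (E i') (?g (i - d1 + i', j)) t) = 0" for t
        using mahler_shift[OF assms(5) gnz, of t] by (simp add: E_def pw)
      have "{..d1} = insert d1 {..<d1}" by auto
      then have "act (E d1) (?g (i, j)) t = - (\<Sum>i'<d1. act (E i') (?g (i - d1 + i', j)) t)" for t
        using rel[of t] True by (simp add: add_eq_0_iff)
      then have eq: "act (E d1) (?g (i, j)) = (\<lambda>t. - (\<Sum>i'<d1. act (E i') (?g (i - d1 + i', j)) t))"
        by (rule ext)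
      have "good ?G ?g (\<lambda>t. - (\<Sum>i'<d1. act (E i') (?g (i - d1 + i', j)) t))"
      proof (intro good_uminus good_sum finG finite_lessThan good_act EQ)
        fix i' assume "i' \<in> {..<d1}"
        then have "i - d1 + i' + j < i + j" using True by auto
        then show "good ?G ?g (?g (i - d1 + i', j))" using less by simp
      qed
      then have "good ?G ?g (act (E d1) (?g (i, j)))" by (simp only: eq)
      then show ?thesis using good_cancel[OF EQ Enz] by simp
    next
      case False2: False
      with False have jd: "d2 \<le> j" by auto
      define \<gamma> where "\<gamma> = \<alpha> ^ i * \<beta> ^ (j - d2)"
      have gnz: "\<gamma> \<noteq> 0" and gQ: "\<gamma> \<in> \<rat>" using assms(1-4) by (auto simp: \<gamma>_def)
      define E where "E = (\<lambda>i'. gsub \<gamma> (pmp (Q i')))"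
      have EQ: "E i' \<in> QA" for i' using gQ by (simp add: E_def QA_gsub QA_pmp)
      have Enz: "E d2 \<noteq> 0" using gnz assms(8) by (simp add: E_def gsub_nz pmp_nz)
      have pw: "\<beta> ^ i' * \<gamma> = \<alpha> ^ i * \<beta> ^ (j - d2 + i')" for i'
        by (simp add: \<gamma>_def power_add)
      have rel: "(\<Sum>i'\<le>d2. act (E i') (?g (i, j - d2 + i')) t) = 0" for t
        using mahler_shift[OF assms(6) gnz, of t] by (simp add: E_def pw)
      have "{..d2} = insert d2 {..<d2}" by auto
      then have "act (E d2) (?g (i, j)) t = - (\<Sum>i'<d2. act (E i') (?g (i, j - d2 + i')) t)" for t
        using rel[of t] jd by (simp add: add_eq_0_iff)
      then have eq: "act (E d2) (?g (i, j)) = (\<lambda>t. - (\<Sum>i'<d2. act (E i') (?g (i, j - d2 + i')) t))"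
        by (rule ext)
      have "good ?G ?g (\<lambda>t. - (\<Sum>i'<d2. act (E i') (?g (i, j - d2 + i')) t))"
      proof (intro good_uminus good_sum finG finite_lessThan good_act EQ)
        fix i' assume "i' \<in> {..<d2}"
        then have "i + (j - d2 + i') < i + j" using jd by auto
        then show "good ?G ?g (?g (i, j - d2 + i'))" using less by simp
      qed
      then have "good ?G ?g (act (E d2) (?g (i, j)))" by (simp only: eq)
      then show ?thesis using good_cancel[OF EQ Enz] by simp
    qed
  qed
qed

definition Phi :: "'i set \<Rightarrow> ('i \<Rightarrow> gp) \<Rightarrow> ('i \<Rightarrow> real) \<Rightarrow> real set" where
  "Phi I e \<gamma> = (\<lambda>(s, s', t). (s' - s) / t) `
     ((\<Union>k\<in>I. Poly_Mapping.keys (e k)) \<times> (\<Union>k\<in>I. Poly_Mapping.keys (e k)) \<times>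
      (\<gamma> ` I \<union> (\<lambda>(k1, k2). \<gamma> k1 - \<gamma> k2) ` (I \<times> I)))"

lemma finite_Phi: "finite I \<Longrightarrow> finite (Phi I e \<gamma>)"
  unfolding Phi_def by auto

lemma Phi_rat:
  assumes "\<forall>k\<in>I. e k \<in> QA" "\<forall>k\<in>I. \<gamma> k \<in> \<rat>"
  shows "Phi I e \<gamma> \<subseteq> \<rat>"
proof
  fix q assume "q \<in> Phi I e \<gamma>"
  then obtain z where z2: "q = (\<lambda>(s, s', t). (s' - s) / t) z" and z1: "z \<in> (\<Union>k\<in>I. Poly_Mapping.keys (e k)) \<times> (\<Union>k\<in>I. Poly_Mapping.keys (e k)) \<times>
      (\<gamma> ` I \<union> (\<lambda>(k1, k2). \<gamma> k1 - \<gamma> k2) ` (I \<times> I))"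
    unfolding Phi_def by (rule imageE)
  obtain s s' t where zz: "z = (s, s', t)" by (cases z)
  have q: "q = (s' - s) / t" using z2 zz by simp
  have s: "s \<in> (\<Union>k\<in>I. Poly_Mapping.keys (e k))" and s': "s' \<in> (\<Union>k\<in>I. Poly_Mapping.keys (e k))"
    and t: "t \<in> \<gamma> ` I \<union> (\<lambda>(k1, k2). \<gamma> k1 - \<gamma> k2) ` (I \<times> I)"
    using z1 zz by auto
  have "s \<in> \<rat>" "s' \<in> \<rat>" using s s' assms(1) unfolding QA_def by auto
  moreover have "t \<in> \<rat>" using t assms(2) by auto
  ultimately show "q \<in> \<rat>" using q by simp
qed

lemma exclusion':
  fixes f :: "real \<Rightarrow> complex" and I :: "'i set" and e :: "'i \<Rightarrow> gp" and \<gamma> :: "'i \<Rightarrow> real" and Y :: "real set"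
  assumes finI: "finite I"
    and rel: "\<forall>j. (\<Sum>k\<in>I. act (e k) (hahn_subst_pow f (\<gamma> k)) j) = 0"
    and gpos: "\<forall>k\<in>I. \<gamma> k > 0" and ginj: "inj_on \<gamma> I"
    and nz: "\<exists>k\<in>I. e k \<noteq> 0"
    and wo: "\<forall>S. S \<subseteq> hahn_support f \<and> S \<noteq> {} \<longrightarrow> (\<exists>m\<in>S. \<forall>x\<in>S. m \<le> x)"
    and Yadd: "\<forall>x\<in>Y. \<forall>y\<in>Y. x + y \<in> Y"
    and Yrat: "\<forall>k\<in>I. \<forall>k'\<in>I. \<forall>u\<in>Y. \<gamma> k' / \<gamma> k * u \<in> Y"
    and YPhi: "Phi I e \<gamma> \<subseteq> Y"
  shows "hahn_support f \<subseteq> Y"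
proof (rule exclusion[OF finI rel gpos ginj nz wo Yadd Yrat])
  show "\<forall>k\<in>I. \<forall>k'\<in>I. \<forall>s\<in>Poly_Mapping.keys (e k). \<forall>s'\<in>Poly_Mapping.keys (e k'). (s' - s) / \<gamma> k \<in> Y"
  proof (intro ballI)
    fix k k' s s' assume h: "k \<in> I" "k' \<in> I" "s \<in> Poly_Mapping.keys (e k)" "s' \<in> Poly_Mapping.keys (e k')"
    have "(s' - s) / \<gamma> k \<in> Phi I e \<gamma>" unfolding Phi_def
      using h by (intro image_eqI[of _ _ "(s, s', \<gamma> k)"]) auto
    then show "(s' - s) / \<gamma> k \<in> Y" using YPhi by blast
  qed
  show "\<forall>k1\<in>I. \<forall>k2\<in>I. k1 \<noteq> k2 \<longrightarrow> (\<forall>s\<in>Poly_Mapping.keys (e k1). \<forall>s'\<in>Poly_Mapping.keys (e k2). (s' - s) / (\<gamma> k1 - \<gamma> k2) \<in> Y)"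
  proof (intro ballI impI)
    fix k1 k2 s s' assume h: "k1 \<in> I" "k2 \<in> I" "s \<in> Poly_Mapping.keys (e k1)" "s' \<in> Poly_Mapping.keys (e k2)"
    have "(s' - s) / (\<gamma> k1 - \<gamma> k2) \<in> Phi I e \<gamma>" unfolding Phi_def
      using h by (intro image_eqI[of _ _ "(s, s', \<gamma> k1 - \<gamma> k2)"]) auto
    then show "(s' - s) / (\<gamma> k1 - \<gamma> k2) \<in> Y" using YPhi by blast
  qed
qed

definition U :: "int \<Rightarrow> real set" where
  "U p = {r. \<exists>x y. \<not> p dvd x \<and> \<not> p dvd y \<and> r = of_int x / of_int y}"

lemma U_one: "prime p \<Longrightarrow> 1 \<in> U p"
proof -
  assume "prime p"
  then have "\<not> p dvd 1" using not_prime_unit by blast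
  then show ?thesis unfolding U_def by (intro CollectI exI[of _ 1]) simp
qed

lemma U_mult: assumes "prime p" "r \<in> U p" "s \<in> U p" shows "r * s \<in> U p"
proof -
  obtain x y where xy: "\<not> p dvd x" "\<not> p dvd y" "r = of_int x / of_int y" using assms(2) by (auto simp: U_def)
  obtain x' y' where xy': "\<not> p dvd x'" "\<not> p dvd y'" "s = of_int x' / of_int y'" using assms(3) by (auto simp: U_def)
  have "\<not> p dvd x * x'" "\<not> p dvd y * y'" using xy xy' assms(1) by (auto simp: prime_dvd_mult_iff)
  moreover have "r * s = of_int (x * x') / of_int (y * y')" using xy xy' by simp
  ultimately show ?thesis unfolding U_def by blast
qed

lemma U_inverse: assumes "r \<in> U p" shows "inverse r \<in> U p"
proof -
  obtain x y where xy: "\<not> p dvd x" "\<not> p dvd y" "r = of_int x / of_int y" using assms by (auto simp: U_def)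
  then have "inverse r = of_int y / of_int x" by simp
  then show ?thesis using xy unfolding U_def by blast
qed

lemma U_power: "prime p \<Longrightarrow> r \<in> U p \<Longrightarrow> r ^ n \<in> U p"
  by (induction n) (auto intro: U_one U_mult)

lemma U_powi: "prime p \<Longrightarrow> r \<in> U p \<Longrightarrow> r powi n \<in> U p"
  by (cases "n \<ge> 0") (auto simp: power_int_def intro!: U_power U_inverse)

lemma U_nz: "prime p \<Longrightarrow> r \<in> U p \<Longrightarrow> r \<noteq> 0"
  unfolding U_def by auto

lemma pdecomp:
  fixes a b :: int
  assumes "prime p" "a > 0" "b > 0"
  shows "\<exists>e::int. \<exists>\<rho>\<in>U p. of_int a / of_int b = (of_int p :: real) powi e * \<rho>"
proof -
  obtain a0 where a0: "a = p ^ multiplicity p a * a0" "\<not> p dvd a0"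
    by (rule multiplicity_decompose'[of a p]) (use assms not_prime_unit in auto)
  obtain b0 where b0: "b = p ^ multiplicity p b * b0" "\<not> p dvd b0"
    by (rule multiplicity_decompose'[of b p]) (use assms not_prime_unit in auto)
  define ea where "ea = multiplicity p a"
  define eb where "eb = multiplicity p b"
  have pnz: "(of_int p :: real) \<noteq> 0" using assms(1) by auto
  have "(of_int p :: real) powi (int ea - int eb) = of_int p ^ ea / of_int p ^ eb"
    using pnz by (simp add: power_int_diff)
  moreover have "(of_int a :: real) / of_int b = (of_int p ^ ea / of_int p ^ eb) * (of_int a0 / of_int b0)"
    using a0 b0 by (simp add: ea_def eb_def)
      (metis (no_types, lifting) of_int_mult of_int_power times_divide_times_eq)
  moreover have "of_int a0 / of_int b0 \<in> U p" using a0 b0 unfolding U_def by blast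
  ultimately show ?thesis by metis
qed

definition R :: "int \<Rightarrow> nat \<Rightarrow> real set" where
  "R p n = {u. \<exists>m::int. \<not> p dvd m \<and> u * of_int m * of_int p ^ n \<in> \<int>}"

lemma R_add: assumes "prime p" "u \<in> R p n" "v \<in> R p n" shows "u + v \<in> R p n"
proof -
  obtain m1 where m1: "\<not> p dvd m1" "u * of_int m1 * of_int p ^ n \<in> \<int>" using assms(2) by (auto simp: R_def)
  obtain m2 where m2: "\<not> p dvd m2" "v * of_int m2 * of_int p ^ n \<in> \<int>" using assms(3) by (auto simp: R_def)
  have "(u + v) * of_int (m1 * m2) * of_int p ^ n =
     (u * of_int m1 * of_int p ^ n) * of_int m2 + (v * of_int m2 * of_int p ^ n) * of_int m1"
    by (simp add: algebra_simps)
  also have "\<dots> \<in> \<int>" using m1 m2 by (metis Ints_add Ints_mult Ints_of_int)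
  finally have "(u + v) * of_int (m1 * m2) * of_int p ^ n \<in> \<int>" .
  moreover have "\<not> p dvd m1 * m2" using m1 m2 assms(1) by (simp add: prime_dvd_mult_iff)
  ultimately show ?thesis unfolding R_def by blast
qed

lemma R_U: assumes "prime p" "r \<in> U p" "u \<in> R p n" shows "r * u \<in> R p n"
proof -
  obtain x y where xy: "\<not> p dvd x" "\<not> p dvd y" "r = of_int x / of_int y" using assms(2) by (auto simp: U_def)
  obtain m where m: "\<not> p dvd m" "u * of_int m * of_int p ^ n \<in> \<int>" using assms(3) by (auto simp: R_def)
  have ynz: "y \<noteq> 0" using xy by auto
  have "r * u * of_int (m * y) * of_int p ^ n = of_int x * (u * of_int m * of_int p ^ n)"
    using xy ynz by (simp add: field_simps)
  also have "\<dots> \<in> \<int>" using m by (metis Ints_mult Ints_of_int)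
  finally have "r * u * of_int (m * y) * of_int p ^ n \<in> \<int>" .
  moreover have "\<not> p dvd m * y" using m xy assms(1) by (simp add: prime_dvd_mult_iff)
  ultimately show ?thesis unfolding R_def by blast
qed

lemma R_mono: assumes "n \<le> n'" "u \<in> R p n" shows "u \<in> R p n'"
proof -
  obtain m where m: "\<not> p dvd m" "u * of_int m * of_int p ^ n \<in> \<int>" using assms(2) by (auto simp: R_def)
  have "u * of_int m * of_int p ^ n' = (u * of_int m * of_int p ^ n) * of_int p ^ (n' - n)"
    using assms(1) by (simp add: power_add[symmetric])
  also have "\<dots> \<in> \<int>" using m by (metis Ints_mult Ints_of_int Ints_power)
  finally show ?thesis using m unfolding R_def by blast
qed

lemma R_rat: assumes "prime p" "q \<in> \<rat>" shows "\<exists>n. q \<in> R p n"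
proof -
  obtain a b where ab: "b > 0" "q = of_int a / of_int b" using assms(2) by (auto elim: Rats_cases')
  obtain b0 where b0: "b = p ^ multiplicity p b * b0" "\<not> p dvd b0"
    by (rule multiplicity_decompose'[of b p]) (use assms ab not_prime_unit in auto)
  have bb: "(of_int b :: real) = of_int p ^ multiplicity p b * of_int b0"
    using b0(1) by (metis of_int_mult of_int_power)
  have bnz: "(of_int b :: real) \<noteq> 0" using ab by simp
  have "q * of_int b0 * of_int p ^ multiplicity p b = q * of_int b"
    using bb by (simp add: mult_ac)
  also have "\<dots> = of_int a" using ab(2) bnz by simp
  finally have "q * of_int b0 * of_int p ^ multiplicity p b = of_int a" .
  then have "q * of_int b0 * of_int p ^ multiplicity p b \<in> \<int>" by simp
  then show ?thesis using b0(2) unfolding R_def by blast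
qed

lemma R_finite: assumes "prime p" "finite \<Phi>" "\<Phi> \<subseteq> \<rat>" shows "\<exists>n. \<Phi> \<subseteq> R p n"
  using assms(2,3)
proof (induction \<Phi> rule: finite_induct)
  case empty then show ?case by auto
next
  case (insert x F)
  then obtain n1 where n1: "F \<subseteq> R p n1" by auto
  from R_rat[OF assms(1), of x] insert.prems obtain n2 where n2: "x \<in> R p n2" by auto
  have "insert x F \<subseteq> R p (max n1 n2)"
    using n1 n2 R_mono[of n1 "max n1 n2" _ p] R_mono[of n2 "max n1 n2" _ p] by auto
  then show ?case by blast
qed

definition Yset :: "int \<Rightarrow> int \<Rightarrow> real set" where
  "Yset N M = {u. \<exists>k::nat. u * of_int M * of_int N ^ k \<in> \<int>}"

lemma Y_add: assumes "u \<in> Yset N M" "v \<in> Yset N M" shows "u + v \<in> Yset N M"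
proof -
  obtain k1 where k1: "u * of_int M * of_int N ^ k1 \<in> \<int>" using assms(1) by (auto simp: Yset_def)
  obtain k2 where k2: "v * of_int M * of_int N ^ k2 \<in> \<int>" using assms(2) by (auto simp: Yset_def)
  have "(u + v) * of_int M * of_int N ^ (k1 + k2) =
      (u * of_int M * of_int N ^ k1) * of_int N ^ k2 + (v * of_int M * of_int N ^ k2) * of_int N ^ k1"
    by (simp add: algebra_simps power_add)
  also have "\<dots> \<in> \<int>" using k1 k2 by (metis Ints_add Ints_mult Ints_of_int Ints_power)
  finally show ?thesis unfolding Yset_def by blast
qed

lemma Y_scale: assumes "q * of_int N ^ k \<in> \<int>" "u \<in> Yset N M" shows "q * u \<in> Yset N M"
proof -
  obtain k1 where k1: "u * of_int M * of_int N ^ k1 \<in> \<int>" using assms(2) by (auto simp: Yset_def)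
  have "q * u * of_int M * of_int N ^ (k + k1) = (q * of_int N ^ k) * (u * of_int M * of_int N ^ k1)"
    by (simp add: algebra_simps power_add)
  also have "\<dots> \<in> \<int>" using k1 assms(1) by (metis Ints_mult)
  finally show ?thesis unfolding Yset_def by blast
qed

lemma rat_common_denom:
  assumes "finite \<Phi>" "\<Phi> \<subseteq> \<rat>"
  shows "\<exists>L::int. L > 0 \<and> (\<forall>q\<in>\<Phi>. q * of_int L \<in> \<int>)"
  using assms
proof (induction \<Phi> rule: finite_induct)
  case empty then show ?case by (intro exI[of _ 1]) auto
next
  case (insert x F)
  then obtain L where L: "L > 0" "\<forall>q\<in>F. q * of_int L \<in> \<int>" by auto
  obtain a b where ab: "b > 0" "x = of_int a / of_int b" using insert(4) by (auto elim: Rats_cases')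
  have "x * of_int (L * b) = of_int (a * L)" using ab by simp
  moreover have "q * of_int (L * b) \<in> \<int>" if "q \<in> F" for q
  proof -
    have "q * of_int (L * b) = (q * of_int L) * of_int b" by simp
    also have "\<dots> \<in> \<int>" using L that by (metis Ints_mult Ints_of_int)
    finally show ?thesis .
  qed
  ultimately show ?case using L ab by (intro exI[of _ "L * b"]) auto
qed

lemma ln_powi: "(a::real) > 0 \<Longrightarrow> ln (a powi n) = of_int n * ln a"
  by (cases "n \<ge> 0") (auto simp: power_int_def ln_realpow ln_inverse)

lemma Ints_Zring: assumes "t \<in> \<int>" shows "t \<in> Zring_gen \<gamma>"
  unfolding Zring_gen_def
proof (intro InterI, clarify)
  fix S :: "real set" assume S: "1 \<in> S" "\<forall>x\<in>S. \<forall>y\<in>S. x + y \<in> S \<and> x - y \<in> S \<and> x * y \<in> S"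
  have nat: "real n \<in> S" for n
  proof (induction n)
    case 0
    have "1 - 1 \<in> S" using S by blast
    then show ?case by simp
  next
    case (Suc n)
    then have "real n + 1 \<in> S" using S by blast
    then show ?case by (simp add: add.commute)
  qed
  obtain z where z: "t = of_int z" using assms by (auto elim: Ints_cases)
  show "t \<in> S"
  proof (cases "z \<ge> 0")
    case True
    then have "t = real (nat z)" using z by simp
    then show ?thesis using nat by simp
  next
    case False
    then have "t = real 0 - real (nat (- z))" using z by simp
    then show ?thesis using nat S by metis
  qed
qed

lemma indep_lin:
  assumes "mult_indep \<alpha> \<beta>" "(x::int) \<noteq> 0 \<or> (y::int) \<noteq> 0"
  shows "of_int x * ln \<alpha> + of_int y * ln \<beta> \<noteq> 0"
proof
  assume h: "of_int x * ln \<alpha> + of_int y * ln \<beta> = 0"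
  have nq: "ln \<alpha> / ln \<beta> \<notin> \<rat>" using assms(1) by (simp add: mult_indep_def)
  have lb: "ln \<beta> \<noteq> 0"
  proof
    assume "ln \<beta> = 0" then show False using nq by simp
  qed
  show False
  proof (cases "x = 0")
    case True
    then have "y \<noteq> 0" using assms(2) by simp
    then show False using h True lb by simp
  next
    case False
    then have "ln \<alpha> = - (of_int y / of_int x) * ln \<beta>" using h by (simp add: field_simps)
    then have "ln \<alpha> / ln \<beta> = - (of_int y / of_int x)" using lb by simp
    moreover have "- (of_int y / of_int x) \<in> (\<rat> :: real set)" by simp
    ultimately show False using nq by simp
  qed
qed

lemma step2:
  fixes \<alpha> \<beta> :: real and p a b a' b' :: int
    and f :: "real \<Rightarrow> complex" and P Q :: "nat \<Rightarrow> complex poly" and d1 d2 :: nat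
  assumes apos: "\<alpha> > 0" "\<beta> > 0" "\<alpha> \<in> \<rat>" "\<beta> \<in> \<rat>"
    and ind: "mult_indep \<alpha> \<beta>"
    and meq: "mahler_eq P d1 \<alpha> f" "mahler_eq Q d2 \<beta> f" "P d1 \<noteq> 0" "Q d2 \<noteq> 0"
    and wo: "\<forall>S. S \<subseteq> hahn_support f \<and> S \<noteq> {} \<longrightarrow> (\<exists>m\<in>S. \<forall>x\<in>S. m \<le> x)"
    and p: "prime p"
    and ab: "a > 0" "b > 0" "\<alpha> = of_int a / of_int b" "a' > 0" "b' > 0" "\<beta> = of_int a' / of_int b'"
  shows "\<exists>n. hahn_support f \<subseteq> R p n"
proof -
  obtain eA \<rho>A where A: "\<rho>A \<in> U p" "\<alpha> = of_int p powi eA * \<rho>A"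
    using pdecomp[OF p ab(1,2)] ab(3) by auto
  obtain eB \<rho>B where B: "\<rho>B \<in> U p" "\<beta> = of_int p powi eB * \<rho>B"
    using pdecomp[OF p ab(4,5)] ab(6) by auto
  define x where "x = (if eA = 0 then 1 else eB)"
  define y where "y = (if eA = 0 then 0 else - eA)"
  have xy0: "x \<noteq> 0 \<or> y \<noteq> 0" by (auto simp: x_def y_def)
  have exy: "eA * x + eB * y = 0" by (auto simp: x_def y_def algebra_simps)
  define \<delta> where "\<delta> = \<alpha> powi x * \<beta> powi y"
  have pnz: "(of_int p :: real) \<noteq> 0" using p by auto
  have \<delta>U: "\<delta> \<in> U p"
  proof -
    have "\<delta> = (of_int p powi eA * \<rho>A) powi x * (of_int p powi eB * \<rho>B) powi y"
      using A B by (simp add: \<delta>_def)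
    also have "\<dots> = of_int p powi (eA * x) * of_int p powi (eB * y) * (\<rho>A powi x * \<rho>B powi y)"
      by (simp add: power_int_mult_distrib power_int_mult mult_ac)
    also have "of_int p powi (eA * x) * of_int p powi (eB * y) = (of_int p :: real) powi (eA * x + eB * y)"
      using pnz by (simp add: power_int_add)
    also have "\<dots> = 1" using exy by simp
    finally have "\<delta> = \<rho>A powi x * \<rho>B powi y" by simp
    then show ?thesis using A B p by (simp add: U_mult U_powi)
  qed
  have \<delta>pos: "\<delta> > 0" using apos by (simp add: \<delta>_def)
  have ln\<delta>: "ln \<delta> = of_int x * ln \<alpha> + of_int y * ln \<beta>"
    using apos by (simp add: \<delta>_def ln_mult ln_powi)
  have ln\<delta>nz: "ln \<delta> \<noteq> 0" using indep_lin[OF ind xy0] ln\<delta> by simp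

  define G where "G = {..<d1} \<times> {..<d2}"
  define g where "g = (\<lambda>(i::nat, j::nat). hahn_subst_pow f (\<alpha> ^ i * \<beta> ^ j))"
  define n0 where "n0 = card G"
  define I where "I = {..n0}"
  define ik where "ik = (\<lambda>k::nat. nat (int n0 * \<bar>x\<bar> + int k * x))"
  define jk where "jk = (\<lambda>k::nat. nat (int n0 * \<bar>y\<bar> + int k * y))"
  define \<gamma> where "\<gamma> = (\<lambda>k. \<alpha> ^ ik k * \<beta> ^ jk k)"
  define C where "C = \<alpha> powi (int n0 * \<bar>x\<bar>) * \<beta> powi (int n0 * \<bar>y\<bar>)"
  have finG: "finite G" and finI: "finite I" by (auto simp: G_def I_def)
  have Cpos: "C > 0" using apos by (simp add: C_def)
  have nonneg: "int n0 * \<bar>z\<bar> + int k * z \<ge> 0" if "k \<le> n0" for k and z :: int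
  proof -
    have "\<bar>int k * z\<bar> \<le> int n0 * \<bar>z\<bar>" using that by (simp add: abs_mult mult_right_mono)
    then show ?thesis by linarith
  qed
  have pow_eq: "r ^ nat (int n0 * \<bar>z\<bar> + int k * z) = r powi (int n0 * \<bar>z\<bar>) * (r powi z) ^ k"
    if "k \<le> n0" "r > 0" for k and z :: int and r :: real
  proof -
    have w: "int (nat (int n0 * \<bar>z\<bar> + int k * z)) = int n0 * \<bar>z\<bar> + int k * z"
      using nonneg[OF that(1), of z] by (simp only: int_nat_eq if_True)
    have "r ^ nat (int n0 * \<bar>z\<bar> + int k * z) = r powi int (nat (int n0 * \<bar>z\<bar> + int k * z))"
      by (simp only: power_int_of_nat)
    also have "\<dots> = r powi (int n0 * \<bar>z\<bar> + int k * z)" by (simp only: w)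
    also have "\<dots> = r powi (int n0 * \<bar>z\<bar>) * r powi (z * int k)"
      using that(2) by (simp add: power_int_add mult.commute)
    also have "r powi (z * int k) = (r powi z) ^ k" by (simp add: power_int_mult)
    finally show ?thesis .
  qed
  have \<gamma>C: "\<gamma> k = C * \<delta> ^ k" if "k \<in> I" for k
  proof -
    have k: "k \<le> n0" using that by (simp add: I_def)
    have "\<gamma> k = \<alpha> powi (int n0 * \<bar>x\<bar>) * (\<alpha> powi x) ^ k * (\<beta> powi (int n0 * \<bar>y\<bar>) * (\<beta> powi y) ^ k)"
      unfolding \<gamma>_def ik_def jk_def using pow_eq[OF k apos(1)] pow_eq[OF k apos(2)] by simp
    also have "\<dots> = C * \<delta> ^ k" by (simp add: C_def \<delta>_def power_mult_distrib mult_ac)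
    finally show ?thesis .
  qed
  have gpos: "\<forall>k\<in>I. \<gamma> k > 0" using apos by (simp add: \<gamma>_def)
  have gQ: "\<forall>k\<in>I. \<gamma> k \<in> \<rat>" using apos by (simp add: \<gamma>_def)
  have ginj: "inj_on \<gamma> I"
  proof (rule inj_onI)
    fix k k' assume kk: "k \<in> I" "k' \<in> I" "\<gamma> k = \<gamma> k'"
    then have "\<delta> ^ k = \<delta> ^ k'" using \<gamma>C Cpos by simp
    then have "ln (\<delta> ^ k) = ln (\<delta> ^ k')" by simp
    then have "real k * ln \<delta> = real k' * ln \<delta>" using \<delta>pos by (simp add: ln_realpow)
    then show "k = k'" using ln\<delta>nz by simp
  qed
  have good: "good G g (hahn_subst_pow f (\<gamma> k))" for k
    using closure_good[OF apos meq, of "ik k" "jk k"] by (simp add: G_def g_def \<gamma>_def)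
  have "\<forall>k\<in>I. \<exists>ca. fst ca \<in> QA \<and> fst ca \<noteq> 0 \<and> (\<forall>l\<in>G. snd ca l \<in> QA) \<and>
      act (fst ca) (hahn_subst_pow f (\<gamma> k)) = (\<lambda>t. \<Sum>l\<in>G. act (snd ca l) (g l) t)"
  proof
    fix k assume "k \<in> I"
    from good[of k] obtain c a where "c \<in> QA" "c \<noteq> 0" "\<forall>l\<in>G. a l \<in> QA"
      "act c (hahn_subst_pow f (\<gamma> k)) = (\<lambda>t. \<Sum>l\<in>G. act (a l) (g l) t)"
      unfolding good_def inspan_def by blast
    then show "\<exists>ca. fst ca \<in> QA \<and> fst ca \<noteq> 0 \<and> (\<forall>l\<in>G. snd ca l \<in> QA) \<and>
      act (fst ca) (hahn_subst_pow f (\<gamma> k)) = (\<lambda>t. \<Sum>l\<in>G. act (snd ca l) (g l) t)"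
      by (intro exI[of _ "(c, a)"]) simp
  qed
  from bchoice[OF this] obtain F where F: "\<forall>k\<in>I. fst (F k) \<in> QA \<and> fst (F k) \<noteq> 0 \<and> (\<forall>l\<in>G. snd (F k) l \<in> QA) \<and>
      act (fst (F k)) (hahn_subst_pow f (\<gamma> k)) = (\<lambda>t. \<Sum>l\<in>G. act (snd (F k) l) (g l) t)"
    by (elim exE)
  define cc where "cc = (\<lambda>k. fst (F k))"
  define aa where "aa = (\<lambda>k. snd (F k))"
  have ccQ: "\<forall>k\<in>I. cc k \<in> QA" and ccnz: "\<forall>k\<in>I. cc k \<noteq> 0"
    and aaQ: "\<forall>k\<in>I. \<forall>l\<in>G. aa k l \<in> QA"
    and ccrel: "\<forall>k\<in>I. act (cc k) (hahn_subst_pow f (\<gamma> k)) = (\<lambda>t. \<Sum>l\<in>G. act (aa k l) (g l) t)"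
    using F by (auto simp: cc_def aa_def)
  have cardI: "card G < card I" by (simp add: I_def n0_def)
  obtain lam where lam: "\<forall>k\<in>I. lam k \<in> QA" "\<exists>k\<in>I. lam k \<noteq> 0" "\<forall>l\<in>G. (\<Sum>k\<in>I. lam k * aa k l) = 0"
    using lin_dep[OF finG finI cardI aaQ] by blast
  define e where "e = (\<lambda>k. lam k * cc k)"
  have rel: "\<forall>t. (\<Sum>k\<in>I. act (e k) (hahn_subst_pow f (\<gamma> k)) t) = 0"
  proof
    fix t
    have each: "act (e k) (hahn_subst_pow f (\<gamma> k)) t = (\<Sum>l\<in>G. act (lam k * aa k l) (g l) t)"
      if "k \<in> I" for k
    proof -
      have "act (e k) (hahn_subst_pow f (\<gamma> k)) t = act (lam k) (act (cc k) (hahn_subst_pow f (\<gamma> k))) t"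
        by (simp add: e_def act_mult)
      also have "\<dots> = act (lam k) (\<lambda>t. \<Sum>l\<in>G. act (aa k l) (g l) t) t"
        using ccrel that by simp
      also have "\<dots> = (\<Sum>l\<in>G. act (lam k) (act (aa k l) (g l)) t)"
        by (rule act_sum_right[OF finG])
      also have "\<dots> = (\<Sum>l\<in>G. act (lam k * aa k l) (g l) t)"
        by (simp add: act_mult)
      finally show ?thesis .
    qed
    have "(\<Sum>k\<in>I. act (e k) (hahn_subst_pow f (\<gamma> k)) t) = (\<Sum>k\<in>I. \<Sum>l\<in>G. act (lam k * aa k l) (g l) t)"
      using each by simp
    also have "\<dots> = (\<Sum>l\<in>G. \<Sum>k\<in>I. act (lam k * aa k l) (g l) t)"
      by (rule sum.swap)
    also have "\<dots> = (\<Sum>l\<in>G. act (\<Sum>k\<in>I. lam k * aa k l) (g l) t)"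
      by (simp add: act_sum_left[OF finI])
    also have "\<dots> = 0" using lam(3) by simp
    finally show "(\<Sum>k\<in>I. act (e k) (hahn_subst_pow f (\<gamma> k)) t) = 0" .
  qed
  have nz: "\<exists>k\<in>I. e k \<noteq> 0" using lam(2) ccnz by (auto simp: e_def)
  have eQ: "\<forall>k\<in>I. e k \<in> QA" using lam(1) ccQ by (simp add: e_def QA_mult)
  have "finite (Phi I e \<gamma>)" "Phi I e \<gamma> \<subseteq> \<rat>"
    using finite_Phi[OF finI] Phi_rat[OF eQ gQ] by auto
  then obtain n where n: "Phi I e \<gamma> \<subseteq> R p n" using R_finite[OF p] by blast
  have Yadd: "\<forall>u\<in>R p n. \<forall>v\<in>R p n. u + v \<in> R p n" using R_add[OF p] by blast
  have Yrat: "\<forall>k\<in>I. \<forall>k'\<in>I. \<forall>u\<in>R p n. \<gamma> k' / \<gamma> k * u \<in> R p n"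
  proof (intro ballI)
    fix k k' u assume h: "k \<in> I" "k' \<in> I" "u \<in> R p n"
    have "\<gamma> k' / \<gamma> k = \<delta> ^ k' * inverse (\<delta> ^ k)"
      using \<gamma>C[OF h(1)] \<gamma>C[OF h(2)] Cpos by (simp add: field_simps)
    moreover have "\<delta> ^ k' * inverse (\<delta> ^ k) \<in> U p"
      using \<delta>U p by (intro U_mult U_power U_inverse)
    ultimately show "\<gamma> k' / \<gamma> k * u \<in> R p n" using R_U[OF p _ h(3)] by simp
  qed
  have "hahn_support f \<subseteq> R p n"
    by (rule exclusion'[OF finI rel gpos ginj nz wo Yadd Yrat n])
  then show ?thesis by blast
qed

lemma assemble:
  fixes S :: "real set" and N L1 :: int
  assumes N: "N > 0" and L1: "L1 > 0" and SY: "S \<subseteq> Yset N L1"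
    and SR: "\<forall>p. prime p \<longrightarrow> p dvd N \<longrightarrow> (\<exists>n. S \<subseteq> R p n)"
  shows "\<exists>l::int. l > 0 \<and> (\<forall>u\<in>S. u * of_int l \<in> \<int>)"
proof -
  define PF where "PF = prime_factors N"
  have finPF: "finite PF" by (simp add: PF_def)
  have PFiff: "q \<in> PF \<longleftrightarrow> prime q \<and> q dvd N" for q
    using N by (auto simp: PF_def in_prime_factors_iff)
  have "\<forall>p\<in>PF. \<exists>n. S \<subseteq> R p n" using SR PFiff by blast
  from bchoice[OF this] obtain np where np: "\<forall>p\<in>PF. S \<subseteq> R p (np p)" by (elim exE)
  define Pr where "Pr = (\<Prod>p\<in>PF. p ^ np p)"
  define l where "l = L1 * Pr"
  have Prpos: "Pr > 0" unfolding Pr_def using PFiff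
    by (intro prod_pos) (simp add: prime_gt_0_int)
  have lpos: "l > 0" using L1 Prpos by (simp add: l_def)
  have "u * of_int l \<in> \<int>" if uS: "u \<in> S" for u
  proof -
    obtain k where k: "u * of_int L1 * of_int N ^ k \<in> \<int>" using SY uS by (auto simp: Yset_def)
    have "\<forall>p\<in>PF. \<exists>m. \<not> p dvd m \<and> u * of_int m * of_int p ^ np p \<in> \<int>"
      using np uS by (auto simp: R_def)
    from bchoice[OF this] obtain mm where mm: "\<forall>p\<in>PF. \<not> p dvd mm p \<and> u * of_int (mm p) * of_int p ^ np p \<in> \<int>"
      by (elim exE)
    define w where "w = u * of_int l"
    define D where "D = N ^ k"
    have Dnz: "D \<noteq> 0" using N by (simp add: D_def)
    have "w * of_int D = (u * of_int L1 * of_int N ^ k) * of_int Pr"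
      by (simp add: w_def D_def l_def mult_ac)
    also have "\<dots> \<in> \<int>" using k by (metis Ints_mult Ints_of_int)
    finally obtain zi where zi: "w * of_int D = of_int zi" by (auto elim: Ints_cases)
    have Ddvd: "D dvd zi * mm p" if pPF: "p \<in> PF" for p
    proof -
      have PFeq: "Pr = p ^ np p * (\<Prod>q\<in>PF - {p}. q ^ np q)"
        unfolding Pr_def using finPF pPF by (simp add: prod.remove)
      have "w * of_int (mm p) = (u * of_int (mm p) * of_int p ^ np p) * of_int (L1 * (\<Prod>q\<in>PF - {p}. q ^ np q))"
        by (simp add: w_def l_def PFeq mult_ac)
      also have "\<dots> \<in> \<int>" using mm pPF by (metis Ints_mult Ints_of_int)
      finally obtain yi where yi: "w * of_int (mm p) = of_int yi" by (auto elim: Ints_cases)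
      have "of_int (zi * mm p) = (of_int (yi * D) :: real)"
        using zi yi by (metis mult.commute mult.left_commute of_int_mult)
      then have "zi * mm p = yi * D" by (simp only: of_int_eq_iff)
      then show ?thesis by (metis dvd_triv_right)
    qed
    have "D dvd zi"
    proof (cases "zi = 0")
      case True then show ?thesis by simp
    next
      case False
      show ?thesis
      proof (rule multiplicity_le_imp_dvd[OF Dnz])
        fix q :: int assume q: "prime q"
        show "multiplicity q D \<le> multiplicity q zi"
        proof (cases "q dvd N")
          case True
          then have qPF: "q \<in> PF" using PFiff q by simp
          have mq: "\<not> q dvd mm q" using mm qPF by blast
          then have mqnz: "mm q \<noteq> 0" by auto
          have "multiplicity q D \<le> multiplicity q (zi * mm q)"
            using Ddvd[OF qPF] False mqnz by (intro dvd_imp_multiplicity_le) auto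
          also have "\<dots> = multiplicity q zi + multiplicity q (mm q)"
            using q False mqnz by (intro prime_elem_multiplicity_mult_distrib) auto
          also have "multiplicity q (mm q) = 0" using mq by (rule not_dvd_imp_multiplicity_0)
          finally show ?thesis by simp
        next
          case False
          then have "\<not> q dvd D" using q by (auto simp: D_def dest: prime_dvd_power)
          then show ?thesis by (simp add: not_dvd_imp_multiplicity_0)
        qed
      qed
    qed
    then obtain t where "zi = D * t" by (elim dvdE)
    then have "w = of_int t" using zi Dnz
      by (metis mult.commute nonzero_mult_div_cancel_left of_int_0_eq_iff of_int_mult)
    then show ?thesis by (simp add: w_def)
  qed
  then show ?thesis using lpos by blast
qed

lemma step1:
  fixes \<alpha> :: real and a b :: int and f :: "real \<Rightarrow> complex" and P :: "nat \<Rightarrow> complex poly" and d1 :: nat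
  assumes ab: "a > 0" "b > 0" "\<alpha> = of_int a / of_int b"
    and meq: "mahler_eq P d1 \<alpha> f" "P d1 \<noteq> 0"
    and wo: "\<forall>S. S \<subseteq> hahn_support f \<and> S \<noteq> {} \<longrightarrow> (\<exists>m\<in>S. \<forall>x\<in>S. m \<le> x)"
    and lna: "ln \<alpha> \<noteq> 0"
  shows "\<exists>L1>0. hahn_support f \<subseteq> Yset (a * b) L1"
proof -
  have apos: "\<alpha> > 0" using ab by simp
  have aQ: "\<alpha> \<in> \<rat>" using ab by simp
  define I where "I = {..d1}"
  define e where "e = (\<lambda>i. pmp (P i))"
  define \<gamma> where "\<gamma> = (\<lambda>i::nat. \<alpha> ^ i)"
  have finI: "finite I" by (simp add: I_def)
  have rel: "\<forall>j. (\<Sum>k\<in>I. act (e k) (hahn_subst_pow f (\<gamma> k)) j) = 0"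
    using mahler_act[OF meq(1)] by (simp add: I_def e_def \<gamma>_def)
  have gpos: "\<forall>k\<in>I. \<gamma> k > 0" using apos by (simp add: \<gamma>_def)
  have ginj: "inj_on \<gamma> I"
  proof (rule inj_onI)
    fix k k' assume "k \<in> I" "k' \<in> I" "\<gamma> k = \<gamma> k'"
    then have "ln (\<alpha> ^ k) = ln (\<alpha> ^ k')" by (simp add: \<gamma>_def)
    then have "real k * ln \<alpha> = real k' * ln \<alpha>" using apos by (simp add: ln_realpow)
    then show "k = k'" using lna by simp
  qed
  have nz: "\<exists>k\<in>I. e k \<noteq> 0" using meq(2) pmp_nz unfolding I_def e_def by (intro bexI[of _ d1]) auto
  have eQ: "\<forall>k\<in>I. e k \<in> QA" by (simp add: e_def QA_pmp)
  have gQ: "\<forall>k\<in>I. \<gamma> k \<in> \<rat>" using aQ by (simp add: \<gamma>_def)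
  have "finite (Phi I e \<gamma>)" "Phi I e \<gamma> \<subseteq> \<rat>"
    using finite_Phi[OF finI] Phi_rat[OF eQ gQ] by auto
  then obtain L1 where L1: "L1 > 0" "\<forall>q\<in>Phi I e \<gamma>. q * of_int L1 \<in> \<int>"
    using rat_common_denom by blast
  define N where "N = a * b"
  have PhiY: "Phi I e \<gamma> \<subseteq> Yset N L1"
  proof
    fix q assume "q \<in> Phi I e \<gamma>"
    then have "q * of_int L1 * of_int N ^ 0 \<in> \<int>" using L1 by simp
    then show "q \<in> Yset N L1" unfolding Yset_def by blast
  qed
  have Yadd: "\<forall>u\<in>Yset N L1. \<forall>v\<in>Yset N L1. u + v \<in> Yset N L1" using Y_add by blast
  have Yrat: "\<forall>k\<in>I. \<forall>k'\<in>I. \<forall>u\<in>Yset N L1. \<gamma> k' / \<gamma> k * u \<in> Yset N L1"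
  proof (intro ballI)
    fix k k' u assume u: "u \<in> Yset N L1"
    have anz: "(of_int a :: real) \<noteq> 0" and bnz: "(of_int b :: real) \<noteq> 0" using ab by auto
    have "\<gamma> k' / \<gamma> k * of_int N ^ (k + k') = of_int (a ^ (k' + k') * b ^ (k + k))"
      using anz bnz by (simp add: \<gamma>_def ab(3) N_def power_divide power_mult_distrib power_add field_simps)
    then have "\<gamma> k' / \<gamma> k * of_int N ^ (k + k') \<in> \<int>" by simp
    then show "\<gamma> k' / \<gamma> k * u \<in> Yset N L1" using Y_scale u by blast
  qed
  have "hahn_support f \<subseteq> Yset N L1"
    by (rule exclusion'[OF finI rel gpos ginj nz wo Yadd Yrat PhiY])
  then show ?thesis using L1 by (auto simp: N_def)
qed

theorem mainTheorem13:
  fixes K :: "complex set" and \<alpha> \<beta> :: real and N :: nat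
    and f :: "real \<Rightarrow> complex"
    and P Q :: "nat \<Rightarrow> complex poly" and d1 d2 :: nat
  assumes "number_field K"
    and "\<alpha> \<in> \<rat>" "\<alpha> > 0" "\<beta> \<in> \<rat>" "\<beta> > 0" "mult_indep \<alpha> \<beta>"
    and "hahn_series K f"
    and "\<forall>i\<le>d1. poly_over K (P i)" "P d1 \<noteq> 0"
    and "\<forall>i\<le>d2. poly_over K (Q i)" "Q d2 \<noteq> 0"
    and "mahler_eq P d1 \<alpha> f" "mahler_eq Q d2 \<beta> f"
  shows "\<exists>l::nat. l > 0 \<and>
    hahn_support (hahn_subst_pow f (real l)) \<subseteq>
      (\<Inter>n\<in>{-int N..int N}. \<Inter>m\<in>{-int N..int N}.
          Zring_gen (\<alpha> powi n * \<beta> powi m))"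
proof -
  obtain a b where ab0: "b > 0" "\<alpha> = of_int a / of_int b"
    using assms(2) by (auto elim: Rats_cases')
  have apos: "a > 0"
  proof (rule ccontr)
    assume "\<not> a > 0"
    then have "(of_int a :: real) \<le> 0" by simp
    then have "\<alpha> \<le> 0" using ab0 by (simp add: divide_nonpos_pos)
    then show False using assms(3) by simp
  qed
  obtain a' b' where ab1: "b' > 0" "\<beta> = of_int a' / of_int b'"
    using assms(4) by (auto elim: Rats_cases')
  have apos': "a' > 0"
  proof (rule ccontr)
    assume "\<not> a' > 0"
    then have "(of_int a' :: real) \<le> 0" by simp
    then have "\<beta> \<le> 0" using ab1 by (simp add: divide_nonpos_pos)
    then show False using assms(5) by simp
  qed
  have wo: "\<forall>S. S \<subseteq> hahn_support f \<and> S \<noteq> {} \<longrightarrow> (\<exists>m\<in>S. \<forall>x\<in>S. m \<le> x)"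
    using assms(7) by (simp add: hahn_series_def)
  have lna: "ln \<alpha> \<noteq> 0" using indep_lin[OF assms(6), of 1 0] by simp
  obtain L1 where L1: "L1 > 0" "hahn_support f \<subseteq> Yset (a * b) L1"
    using step1[OF apos ab0(1) ab0(2) assms(12) assms(9) wo lna] by blast
  have SR: "\<forall>p. prime p \<longrightarrow> p dvd (a * b) \<longrightarrow> (\<exists>n. hahn_support f \<subseteq> R p n)"
  proof (intro allI impI)
    fix p :: int assume "prime p"
    show "\<exists>n. hahn_support f \<subseteq> R p n"
      by (rule step2[OF assms(3) assms(5) assms(2) assms(4) assms(6) assms(12) assms(13) assms(9) assms(11)
            wo \<open>prime p\<close> apos ab0(1) ab0(2) apos' ab1(1) ab1(2)])
  qed
  have Npos: "a * b > 0" using apos ab0(1) by simp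
  obtain l where l: "l > 0" "\<forall>u\<in>hahn_support f. u * of_int l \<in> \<int>"
    using assemble[OF Npos L1(1) L1(2) SR] by blast
  have lr: "real (nat l) = of_int l" using l(1) by simp
  have sub: "hahn_support (hahn_subst_pow f (real (nat l))) \<subseteq> \<int>"
  proof
    fix t assume "t \<in> hahn_support (hahn_subst_pow f (real (nat l)))"
    then have "f (t / of_int l) \<noteq> 0" by (simp add: hahn_support_def hahn_subst_pow_def lr)
    then have "t / of_int l \<in> hahn_support f" by (simp add: hahn_support_def)
    then have "t / of_int l * of_int l \<in> \<int>" using l(2) by blast
    then show "t \<in> \<int>" using l(1) by simp
  qed
  show ?thesis
  proof (intro exI[of _ "nat l"] conjI)
    show "nat l > 0" using l(1) by simp
    show "hahn_support (hahn_subst_pow f (real (nat l))) \<subseteq>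
      (\<Inter>n\<in>{-int N..int N}. \<Inter>m\<in>{-int N..int N}. Zring_gen (\<alpha> powi n * \<beta> powi m))"
      using sub Ints_Zring by blast
  qed
qed

end
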